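(* Let $G=(V,E)$ be a connected almost bipartite permutation graph that contains a hole, let $C$ be a shortest hole, $m=|C|$, $c_0,\dots,c_{m-1}$ its vertices in cyclic order (indices modulo $m$), and for each $i$ let $A_i=\{v\in V: N(v)\cap C=\{c_{i-1},c_{i+1}\}\}$ and $B_i=\{v\in V: N(v)\cap C=\{c_i\}\}$ (indices modulo $m$). For $i\in\{0,\dots,m-1\}$ define the relation $<_{A_i}$ on $A_i$ by: $u<_{A_i}u'$ iff there is $w\in B_{i-2}\cup A_{i-1}$ with $u\in N(w)$ and $u'\notin N(w)$, or there is $w\in A_{i+1}\cup B_{i+2}$ with $u'\in N(w)$ and $u\notin N(w)$. Define $<_{B_i}$ on $B_i$ by: $w<_{B_i}w'$ iff there is $u\in A_{i-2}\cup B_{i-1}$ with $w\in N(u)$ and $w'\notin N(u)$, or there is $u\in B_{i+1}\cup A_{i+2}$ with $w'\in N(u)$ and $w\notin N(u)$. Then for every $i\in\{0,\dots,m-1\}$: (1) $(A_i,<_{A_i})$ is a strict partial order, and $u,u'\in A_i$ are incomparable in it if and only if $N(u)=N(u')$; (2) $(B_i,<_{B_i})$ is a strict partial order, and $w,w'\in B_i$ are incomparable in it if and only if $N(w)=N(w')$.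
   Context: All graphs are finite, simple, undirected; $N(v)$ is the open neighborhood of $v$. A hole is an induced cycle on at least five vertices. $K_3$ is the triangle, $C_k$ the cycle on $k$ vertices. $T_2$ is the tree on 7 vertices obtained from the claw $K_{1,3}$ by subdividing each edge once. $X_2$ is the 7-vertex graph obtained from a 4-cycle by attaching one new pendant vertex to each of three of its four vertices. $X_3$ is the 7-vertex graph obtained from the domino (two 4-cycles sharing exactly one edge) by attaching one new pendant vertex to one endpoint of the shared edge. A graph is an almost bipartite permutation graph if it contains none of $T_2, X_2, X_3, K_3, C_5,\dots,C_9$ as an induced subgraph. A strict partial order is an irreflexive transitive relation. *)

theory Defs
  imports Main
begin

definition simple_graph :: "'a set \<Rightarrow> ('a \<Rightarrow> 'a \<Rightarrow> bool) \<Rightarrow> bool" where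
  "simple_graph V E \<longleftrightarrow> finite V \<and> (\<forall>x y. E x y \<longrightarrow> x \<in> V \<and> y \<in> V)
     \<and> (\<forall>x y. E x y \<longrightarrow> E y x) \<and> (\<forall>x. \<not> E x x)"

definition connected_graph :: "'a set \<Rightarrow> ('a \<Rightarrow> 'a \<Rightarrow> bool) \<Rightarrow> bool" where
  "connected_graph V E \<longleftrightarrow> V \<noteq> {} \<and> (\<forall>x\<in>V. \<forall>y\<in>V. E\<^sup>*\<^sup>* x y)"

definition nbhd :: "('a \<Rightarrow> 'a \<Rightarrow> bool) \<Rightarrow> 'a \<Rightarrow> 'a set" where
  "nbhd E v = {u. E v u}"

definition has_induced :: "'a set \<Rightarrow> ('a \<Rightarrow> 'a \<Rightarrow> bool) \<Rightarrow> nat \<Rightarrow> (nat \<Rightarrow> nat \<Rightarrow> bool) \<Rightarrow> bool" where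
  "has_induced V E n H \<longleftrightarrow> (\<exists>f. inj_on f {0..<n} \<and> f ` {0..<n} \<subseteq> V \<and>
      (\<forall>i<n. \<forall>j<n. E (f i) (f j) \<longleftrightarrow> H i j))"

definition edges_of :: "(nat \<times> nat) list \<Rightarrow> nat \<Rightarrow> nat \<Rightarrow> bool" where
  "edges_of es i j \<longleftrightarrow> (i, j) \<in> set es \<or> (j, i) \<in> set es"

definition cycle_graph :: "nat \<Rightarrow> nat \<Rightarrow> nat \<Rightarrow> bool" where
  "cycle_graph k i j \<longleftrightarrow> i < k \<and> j < k \<and> (j = Suc i mod k \<or> i = Suc j mod k)"

(* T_2: claw with each edge subdivided; centre 0 *)
definition T2 :: "nat \<Rightarrow> nat \<Rightarrow> bool" where
  "T2 = edges_of [(0,1),(1,2),(0,3),(3,4),(0,5),(5,6)]"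

(* X_2: 4-cycle 0-1-2-3-0 with pendants 4,5,6 at 0,1,2 *)
definition X2 :: "nat \<Rightarrow> nat \<Rightarrow> bool" where
  "X2 = edges_of [(0,1),(1,2),(2,3),(3,0),(0,4),(1,5),(2,6)]"

(* X_3: domino (2x3 grid, top row 0,1,2, bottom row 3,4,5, shared edge 1-4)
   with pendant 6 attached to 1 *)
definition X3 :: "nat \<Rightarrow> nat \<Rightarrow> bool" where
  "X3 = edges_of [(0,1),(1,2),(3,4),(4,5),(0,3),(1,4),(2,5),(1,6)]"

definition almost_bip_perm :: "'a set \<Rightarrow> ('a \<Rightarrow> 'a \<Rightarrow> bool) \<Rightarrow> bool" where
  "almost_bip_perm V E \<longleftrightarrow>
     \<not> has_induced V E 7 T2 \<and> \<not> has_induced V E 7 X2 \<and> \<not> has_induced V E 7 X3 \<and>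
     \<not> has_induced V E 3 (cycle_graph 3) \<and>
     (\<forall>k. 5 \<le> k \<and> k \<le> 9 \<longrightarrow> \<not> has_induced V E k (cycle_graph k))"

definition is_hole :: "'a set \<Rightarrow> ('a \<Rightarrow> 'a \<Rightarrow> bool) \<Rightarrow> (nat \<Rightarrow> 'a) \<Rightarrow> nat \<Rightarrow> bool" where
  "is_hole V E c m \<longleftrightarrow> 5 \<le> m \<and> inj_on c {0..<m} \<and> c ` {0..<m} \<subseteq> V \<and>
     (\<forall>i<m. \<forall>j<m. E (c i) (c j) \<longleftrightarrow> cycle_graph m i j)"

definition shortest_hole :: "'a set \<Rightarrow> ('a \<Rightarrow> 'a \<Rightarrow> bool) \<Rightarrow> (nat \<Rightarrow> 'a) \<Rightarrow> nat \<Rightarrow> bool" where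
  "shortest_hole V E c m \<longleftrightarrow> is_hole V E c m \<and>
     (\<forall>(c' :: nat \<Rightarrow> 'a) m'. is_hole V E c' m' \<longrightarrow> m \<le> m')"

definition cyc :: "(nat \<Rightarrow> 'a) \<Rightarrow> nat \<Rightarrow> int \<Rightarrow> 'a" where
  "cyc c m k = c (nat (k mod int m))"

definition Aset :: "'a set \<Rightarrow> ('a \<Rightarrow> 'a \<Rightarrow> bool) \<Rightarrow> (nat \<Rightarrow> 'a) \<Rightarrow> nat \<Rightarrow> int \<Rightarrow> 'a set" where
  "Aset V E c m i = {v \<in> V. nbhd E v \<inter> c ` {0..<m} = {cyc c m (i - 1), cyc c m (i + 1)}}"

definition Bset :: "'a set \<Rightarrow> ('a \<Rightarrow> 'a \<Rightarrow> bool) \<Rightarrow> (nat \<Rightarrow> 'a) \<Rightarrow> nat \<Rightarrow> int \<Rightarrow> 'a set" where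
  "Bset V E c m i = {v \<in> V. nbhd E v \<inter> c ` {0..<m} = {cyc c m i}}"

definition ltA :: "'a set \<Rightarrow> ('a \<Rightarrow> 'a \<Rightarrow> bool) \<Rightarrow> (nat \<Rightarrow> 'a) \<Rightarrow> nat \<Rightarrow> int \<Rightarrow> 'a \<Rightarrow> 'a \<Rightarrow> bool" where
  "ltA V E c m i u u' \<longleftrightarrow>
     (\<exists>w \<in> Bset V E c m (i - 2) \<union> Aset V E c m (i - 1). u \<in> nbhd E w \<and> u' \<notin> nbhd E w) \<or>
     (\<exists>w \<in> Aset V E c m (i + 1) \<union> Bset V E c m (i + 2). u' \<in> nbhd E w \<and> u \<notin> nbhd E w)"

definition ltB :: "'a set \<Rightarrow> ('a \<Rightarrow> 'a \<Rightarrow> bool) \<Rightarrow> (nat \<Rightarrow> 'a) \<Rightarrow> nat \<Rightarrow> int \<Rightarrow> 'a \<Rightarrow> 'a \<Rightarrow> bool" where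
  "ltB V E c m i w w' \<longleftrightarrow>
     (\<exists>u \<in> Aset V E c m (i - 2) \<union> Bset V E c m (i - 1). w \<in> nbhd E u \<and> w' \<notin> nbhd E u) \<or>
     (\<exists>u \<in> Bset V E c m (i + 1) \<union> Aset V E c m (i + 2). w' \<in> nbhd E u \<and> w \<notin> nbhd E u)"

definition strict_po_on :: "'a set \<Rightarrow> ('a \<Rightarrow> 'a \<Rightarrow> bool) \<Rightarrow> bool" where
  "strict_po_on S R \<longleftrightarrow> irreflp_on S R \<and> transp_on S R"

end

theory Submission
  imports Defs
begin

lemma lt7: "(i::nat) < 7 \<longleftrightarrow> i = 0 \<or> i = 1 \<or> i = 2 \<or> i = 3 \<or> i = 4 \<or> i = 5 \<or> i = 6" by auto
lemma all_less_7: "(\<forall>i<(7::nat). P i) \<longleftrightarrow> P 0 \<and> P 1 \<and> P 2 \<and> P 3 \<and> P 4 \<and> P 5 \<and> P 6"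
  unfolding lt7 by blast
lemma ball_less_7: "(\<forall>i\<in>{0..<(7::nat)}. P i) \<longleftrightarrow> P 0 \<and> P 1 \<and> P 2 \<and> P 3 \<and> P 4 \<and> P 5 \<and> P 6"
proof -
  have h: "(\<forall>i\<in>{0..<(7::nat)}. P i) = (\<forall>i<7. P i)" by auto
  show ?thesis using h all_less_7[of P] by (rule trans)
qed
lemma inj7: "distinct [a0,a1,a2,a3,a4,a5,a6] \<Longrightarrow> inj_on (\<lambda>k. [a0,a1,a2,a3,a4,a5,a6] ! k) {0..<7}"
  by (rule inj_on_nth) auto
lemma T2_contra:
  assumes sg: "simple_graph V E" and ab: "almost_bip_perm V E"
  and "E a0 a1 \<or> E a1 a0" "E a1 a2 \<or> E a2 a1" "E a0 a3 \<or> E a3 a0" "E a3 a4 \<or> E a4 a3" "E a0 a5 \<or> E a5 a0" "E a5 a6 \<or> E a6 a5"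
  and "\<not> E a0 a2 \<or> \<not> E a2 a0" "\<not> E a0 a4 \<or> \<not> E a4 a0" "\<not> E a0 a6 \<or> \<not> E a6 a0" "\<not> E a1 a3 \<or> \<not> E a3 a1" "\<not> E a1 a4 \<or> \<not> E a4 a1" "\<not> E a1 a5 \<or> \<not> E a5 a1" "\<not> E a1 a6 \<or> \<not> E a6 a1" "\<not> E a2 a3 \<or> \<not> E a3 a2" "\<not> E a2 a4 \<or> \<not> E a4 a2" "\<not> E a2 a5 \<or> \<not> E a5 a2" "\<not> E a2 a6 \<or> \<not> E a6 a2" "\<not> E a3 a5 \<or> \<not> E a5 a3" "\<not> E a3 a6 \<or> \<not> E a6 a3" "\<not> E a4 a5 \<or> \<not> E a5 a4" "\<not> E a4 a6 \<or> \<not> E a6 a4"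
  shows False
proof -
  have sym: "\<And>x y. E x y \<Longrightarrow> E y x" and irr: "\<And>x. \<not> E x x" and inV: "\<And>x y. E x y \<Longrightarrow> x \<in> V"
    using sg unfolding simple_graph_def by blast+
  have nsym: "\<And>x y. \<not> E x y \<Longrightarrow> \<not> E y x" using sym by blast
  have F1_0: "E a0 a1" using assms(3) sym by blast
  have F1_1: "E a1 a2" using assms(4) sym by blast
  have F1_2: "E a0 a3" using assms(5) sym by blast
  have F1_3: "E a3 a4" using assms(6) sym by blast
  have F1_4: "E a0 a5" using assms(7) sym by blast
  have F1_5: "E a5 a6" using assms(8) sym by blast
  have F2_0: "\<not> E a0 a2" using assms(9) nsym by blast
  have F2_1: "\<not> E a0 a4" using assms(10) nsym by blast
  have F2_2: "\<not> E a0 a6" using assms(11) nsym by blast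
  have F2_3: "\<not> E a1 a3" using assms(12) nsym by blast
  have F2_4: "\<not> E a1 a4" using assms(13) nsym by blast
  have F2_5: "\<not> E a1 a5" using assms(14) nsym by blast
  have F2_6: "\<not> E a1 a6" using assms(15) nsym by blast
  have F2_7: "\<not> E a2 a3" using assms(16) nsym by blast
  have F2_8: "\<not> E a2 a4" using assms(17) nsym by blast
  have F2_9: "\<not> E a2 a5" using assms(18) nsym by blast
  have F2_10: "\<not> E a2 a6" using assms(19) nsym by blast
  have F2_11: "\<not> E a3 a5" using assms(20) nsym by blast
  have F2_12: "\<not> E a3 a6" using assms(21) nsym by blast
  have F2_13: "\<not> E a4 a5" using assms(22) nsym by blast
  have F2_14: "\<not> E a4 a6" using assms(23) nsym by blast
  note F1 = F1_0 F1_1 F1_2 F1_3 F1_4 F1_5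
  note F2 = F2_0 F2_1 F2_2 F2_3 F2_4 F2_5 F2_6 F2_7 F2_8 F2_9 F2_10 F2_11 F2_12 F2_13 F2_14
  note F = F1 F2 F1[THEN sym] F2[THEN nsym]
  have "a0 \<noteq> a1" using \<open>E a0 a1\<close> irr by auto
  moreover have "a0 \<noteq> a2" using \<open>E a0 a3\<close> \<open>\<not> E a2 a3\<close> by auto
  moreover have "a0 \<noteq> a3" using \<open>E a0 a3\<close> irr by auto
  moreover have "a0 \<noteq> a4" using \<open>E a0 a1\<close> \<open>\<not> E a4 a1\<close> by auto
  moreover have "a0 \<noteq> a5" using \<open>E a0 a5\<close> irr by auto
  moreover have "a0 \<noteq> a6" using \<open>E a0 a1\<close> \<open>\<not> E a6 a1\<close> by auto
  moreover have "a1 \<noteq> a2" using \<open>E a1 a2\<close> irr by auto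
  moreover have "a1 \<noteq> a3" using \<open>E a1 a2\<close> \<open>\<not> E a3 a2\<close> by auto
  moreover have "a1 \<noteq> a4" using \<open>E a1 a0\<close> \<open>\<not> E a4 a0\<close> by auto
  moreover have "a1 \<noteq> a5" using \<open>E a1 a2\<close> \<open>\<not> E a5 a2\<close> by auto
  moreover have "a1 \<noteq> a6" using \<open>E a1 a0\<close> \<open>\<not> E a6 a0\<close> by auto
  moreover have "a2 \<noteq> a3" using \<open>E a3 a0\<close> \<open>\<not> E a2 a0\<close> by auto
  moreover have "a2 \<noteq> a4" using \<open>E a2 a1\<close> \<open>\<not> E a4 a1\<close> by auto
  moreover have "a2 \<noteq> a5" using \<open>E a5 a0\<close> \<open>\<not> E a2 a0\<close> by auto
  moreover have "a2 \<noteq> a6" using \<open>E a2 a1\<close> \<open>\<not> E a6 a1\<close> by auto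
  moreover have "a3 \<noteq> a4" using \<open>E a3 a4\<close> irr by auto
  moreover have "a3 \<noteq> a5" using \<open>E a3 a4\<close> \<open>\<not> E a5 a4\<close> by auto
  moreover have "a3 \<noteq> a6" using \<open>E a3 a0\<close> \<open>\<not> E a6 a0\<close> by auto
  moreover have "a4 \<noteq> a5" using \<open>E a5 a0\<close> \<open>\<not> E a4 a0\<close> by auto
  moreover have "a4 \<noteq> a6" using \<open>E a4 a3\<close> \<open>\<not> E a6 a3\<close> by auto
  moreover have "a5 \<noteq> a6" using \<open>E a5 a6\<close> irr by auto
  ultimately have d: "distinct [a0,a1,a2,a3,a4,a5,a6]" by simp
  have "has_induced V E 7 T2"
    unfolding has_induced_def
    apply (rule exI[of _ "\<lambda>k. [a0,a1,a2,a3,a4,a5,a6] ! k"])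
    using inj7[OF d] F inV irr by (simp add: all_less_7 ball_less_7 T2_def edges_of_def image_subset_iff)
  with ab show False unfolding almost_bip_perm_def by blast
qed
lemma X2_contra:
  assumes sg: "simple_graph V E" and ab: "almost_bip_perm V E"
  and "E a0 a1 \<or> E a1 a0" "E a1 a2 \<or> E a2 a1" "E a2 a3 \<or> E a3 a2" "E a3 a0 \<or> E a0 a3" "E a0 a4 \<or> E a4 a0" "E a1 a5 \<or> E a5 a1" "E a2 a6 \<or> E a6 a2"
  and "\<not> E a0 a2 \<or> \<not> E a2 a0" "\<not> E a0 a5 \<or> \<not> E a5 a0" "\<not> E a0 a6 \<or> \<not> E a6 a0" "\<not> E a1 a3 \<or> \<not> E a3 a1" "\<not> E a1 a4 \<or> \<not> E a4 a1" "\<not> E a1 a6 \<or> \<not> E a6 a1" "\<not> E a2 a4 \<or> \<not> E a4 a2" "\<not> E a2 a5 \<or> \<not> E a5 a2" "\<not> E a3 a4 \<or> \<not> E a4 a3" "\<not> E a3 a5 \<or> \<not> E a5 a3" "\<not> E a3 a6 \<or> \<not> E a6 a3" "\<not> E a4 a5 \<or> \<not> E a5 a4" "\<not> E a4 a6 \<or> \<not> E a6 a4" "\<not> E a5 a6 \<or> \<not> E a6 a5"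
  shows False
proof -
  have sym: "\<And>x y. E x y \<Longrightarrow> E y x" and irr: "\<And>x. \<not> E x x" and inV: "\<And>x y. E x y \<Longrightarrow> x \<in> V"
    using sg unfolding simple_graph_def by blast+
  have nsym: "\<And>x y. \<not> E x y \<Longrightarrow> \<not> E y x" using sym by blast
  have F1_0: "E a0 a1" using assms(3) sym by blast
  have F1_1: "E a1 a2" using assms(4) sym by blast
  have F1_2: "E a2 a3" using assms(5) sym by blast
  have F1_3: "E a3 a0" using assms(6) sym by blast
  have F1_4: "E a0 a4" using assms(7) sym by blast
  have F1_5: "E a1 a5" using assms(8) sym by blast
  have F1_6: "E a2 a6" using assms(9) sym by blast
  have F2_0: "\<not> E a0 a2" using assms(10) nsym by blast
  have F2_1: "\<not> E a0 a5" using assms(11) nsym by blast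
  have F2_2: "\<not> E a0 a6" using assms(12) nsym by blast
  have F2_3: "\<not> E a1 a3" using assms(13) nsym by blast
  have F2_4: "\<not> E a1 a4" using assms(14) nsym by blast
  have F2_5: "\<not> E a1 a6" using assms(15) nsym by blast
  have F2_6: "\<not> E a2 a4" using assms(16) nsym by blast
  have F2_7: "\<not> E a2 a5" using assms(17) nsym by blast
  have F2_8: "\<not> E a3 a4" using assms(18) nsym by blast
  have F2_9: "\<not> E a3 a5" using assms(19) nsym by blast
  have F2_10: "\<not> E a3 a6" using assms(20) nsym by blast
  have F2_11: "\<not> E a4 a5" using assms(21) nsym by blast
  have F2_12: "\<not> E a4 a6" using assms(22) nsym by blast
  have F2_13: "\<not> E a5 a6" using assms(23) nsym by blast
  note F1 = F1_0 F1_1 F1_2 F1_3 F1_4 F1_5 F1_6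
  note F2 = F2_0 F2_1 F2_2 F2_3 F2_4 F2_5 F2_6 F2_7 F2_8 F2_9 F2_10 F2_11 F2_12 F2_13
  note F = F1 F2 F1[THEN sym] F2[THEN nsym]
  have "a0 \<noteq> a1" using \<open>E a0 a1\<close> irr by auto
  moreover have "a0 \<noteq> a2" using \<open>E a0 a4\<close> \<open>\<not> E a2 a4\<close> by auto
  moreover have "a0 \<noteq> a3" using \<open>E a0 a3\<close> irr by auto
  moreover have "a0 \<noteq> a4" using \<open>E a0 a4\<close> irr by auto
  moreover have "a0 \<noteq> a5" using \<open>E a0 a3\<close> \<open>\<not> E a5 a3\<close> by auto
  moreover have "a0 \<noteq> a6" using \<open>E a0 a1\<close> \<open>\<not> E a6 a1\<close> by auto
  moreover have "a1 \<noteq> a2" using \<open>E a1 a2\<close> irr by auto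
  moreover have "a1 \<noteq> a3" using \<open>E a1 a5\<close> \<open>\<not> E a3 a5\<close> by auto
  moreover have "a1 \<noteq> a4" using \<open>E a1 a2\<close> \<open>\<not> E a4 a2\<close> by auto
  moreover have "a1 \<noteq> a5" using \<open>E a1 a5\<close> irr by auto
  moreover have "a1 \<noteq> a6" using \<open>E a1 a0\<close> \<open>\<not> E a6 a0\<close> by auto
  moreover have "a2 \<noteq> a3" using \<open>E a2 a3\<close> irr by auto
  moreover have "a2 \<noteq> a4" using \<open>E a4 a0\<close> \<open>\<not> E a2 a0\<close> by auto
  moreover have "a2 \<noteq> a5" using \<open>E a2 a3\<close> \<open>\<not> E a5 a3\<close> by auto
  moreover have "a2 \<noteq> a6" using \<open>E a2 a6\<close> irr by auto
  moreover have "a3 \<noteq> a4" using \<open>E a3 a2\<close> \<open>\<not> E a4 a2\<close> by auto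
  moreover have "a3 \<noteq> a5" using \<open>E a3 a0\<close> \<open>\<not> E a5 a0\<close> by auto
  moreover have "a3 \<noteq> a6" using \<open>E a3 a0\<close> \<open>\<not> E a6 a0\<close> by auto
  moreover have "a4 \<noteq> a5" using \<open>E a4 a0\<close> \<open>\<not> E a5 a0\<close> by auto
  moreover have "a4 \<noteq> a6" using \<open>E a4 a0\<close> \<open>\<not> E a6 a0\<close> by auto
  moreover have "a5 \<noteq> a6" using \<open>E a5 a1\<close> \<open>\<not> E a6 a1\<close> by auto
  ultimately have d: "distinct [a0,a1,a2,a3,a4,a5,a6]" by simp
  have "has_induced V E 7 X2"
    unfolding has_induced_def
    apply (rule exI[of _ "\<lambda>k. [a0,a1,a2,a3,a4,a5,a6] ! k"])
    using inj7[OF d] F inV irr by (simp add: all_less_7 ball_less_7 X2_def edges_of_def image_subset_iff)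
  with ab show False unfolding almost_bip_perm_def by blast
qed
lemma X3_contra:
  assumes sg: "simple_graph V E" and ab: "almost_bip_perm V E"
  and "E a0 a1 \<or> E a1 a0" "E a1 a2 \<or> E a2 a1" "E a3 a4 \<or> E a4 a3" "E a4 a5 \<or> E a5 a4" "E a0 a3 \<or> E a3 a0" "E a1 a4 \<or> E a4 a1" "E a2 a5 \<or> E a5 a2" "E a1 a6 \<or> E a6 a1"
  and "\<not> E a0 a2 \<or> \<not> E a2 a0" "\<not> E a0 a4 \<or> \<not> E a4 a0" "\<not> E a0 a5 \<or> \<not> E a5 a0" "\<not> E a0 a6 \<or> \<not> E a6 a0" "\<not> E a1 a3 \<or> \<not> E a3 a1" "\<not> E a1 a5 \<or> \<not> E a5 a1" "\<not> E a2 a3 \<or> \<not> E a3 a2" "\<not> E a2 a4 \<or> \<not> E a4 a2" "\<not> E a2 a6 \<or> \<not> E a6 a2" "\<not> E a3 a5 \<or> \<not> E a5 a3" "\<not> E a3 a6 \<or> \<not> E a6 a3" "\<not> E a4 a6 \<or> \<not> E a6 a4" "\<not> E a5 a6 \<or> \<not> E a6 a5"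
  shows False
proof -
  have sym: "\<And>x y. E x y \<Longrightarrow> E y x" and irr: "\<And>x. \<not> E x x" and inV: "\<And>x y. E x y \<Longrightarrow> x \<in> V"
    using sg unfolding simple_graph_def by blast+
  have nsym: "\<And>x y. \<not> E x y \<Longrightarrow> \<not> E y x" using sym by blast
  have F1_0: "E a0 a1" using assms(3) sym by blast
  have F1_1: "E a1 a2" using assms(4) sym by blast
  have F1_2: "E a3 a4" using assms(5) sym by blast
  have F1_3: "E a4 a5" using assms(6) sym by blast
  have F1_4: "E a0 a3" using assms(7) sym by blast
  have F1_5: "E a1 a4" using assms(8) sym by blast
  have F1_6: "E a2 a5" using assms(9) sym by blast
  have F1_7: "E a1 a6" using assms(10) sym by blast
  have F2_0: "\<not> E a0 a2" using assms(11) nsym by blast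
  have F2_1: "\<not> E a0 a4" using assms(12) nsym by blast
  have F2_2: "\<not> E a0 a5" using assms(13) nsym by blast
  have F2_3: "\<not> E a0 a6" using assms(14) nsym by blast
  have F2_4: "\<not> E a1 a3" using assms(15) nsym by blast
  have F2_5: "\<not> E a1 a5" using assms(16) nsym by blast
  have F2_6: "\<not> E a2 a3" using assms(17) nsym by blast
  have F2_7: "\<not> E a2 a4" using assms(18) nsym by blast
  have F2_8: "\<not> E a2 a6" using assms(19) nsym by blast
  have F2_9: "\<not> E a3 a5" using assms(20) nsym by blast
  have F2_10: "\<not> E a3 a6" using assms(21) nsym by blast
  have F2_11: "\<not> E a4 a6" using assms(22) nsym by blast
  have F2_12: "\<not> E a5 a6" using assms(23) nsym by blast
  note F1 = F1_0 F1_1 F1_2 F1_3 F1_4 F1_5 F1_6 F1_7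
  note F2 = F2_0 F2_1 F2_2 F2_3 F2_4 F2_5 F2_6 F2_7 F2_8 F2_9 F2_10 F2_11 F2_12
  note F = F1 F2 F1[THEN sym] F2[THEN nsym]
  have "a0 \<noteq> a1" using \<open>E a0 a1\<close> irr by auto
  moreover have "a0 \<noteq> a2" using \<open>E a0 a3\<close> \<open>\<not> E a2 a3\<close> by auto
  moreover have "a0 \<noteq> a3" using \<open>E a0 a3\<close> irr by auto
  moreover have "a0 \<noteq> a4" using \<open>E a4 a5\<close> \<open>\<not> E a0 a5\<close> by auto
  moreover have "a0 \<noteq> a5" using \<open>E a0 a1\<close> \<open>\<not> E a5 a1\<close> by auto
  moreover have "a0 \<noteq> a6" using \<open>E a0 a3\<close> \<open>\<not> E a6 a3\<close> by auto
  moreover have "a1 \<noteq> a2" using \<open>E a1 a2\<close> irr by auto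
  moreover have "a1 \<noteq> a3" using \<open>E a1 a2\<close> \<open>\<not> E a3 a2\<close> by auto
  moreover have "a1 \<noteq> a4" using \<open>E a1 a4\<close> irr by auto
  moreover have "a1 \<noteq> a5" using \<open>E a1 a0\<close> \<open>\<not> E a5 a0\<close> by auto
  moreover have "a1 \<noteq> a6" using \<open>E a1 a6\<close> irr by auto
  moreover have "a2 \<noteq> a3" using \<open>E a3 a0\<close> \<open>\<not> E a2 a0\<close> by auto
  moreover have "a2 \<noteq> a4" using \<open>E a4 a3\<close> \<open>\<not> E a2 a3\<close> by auto
  moreover have "a2 \<noteq> a5" using \<open>E a2 a5\<close> irr by auto
  moreover have "a2 \<noteq> a6" using \<open>E a2 a5\<close> \<open>\<not> E a6 a5\<close> by auto
  moreover have "a3 \<noteq> a4" using \<open>E a3 a4\<close> irr by auto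
  moreover have "a3 \<noteq> a5" using \<open>E a3 a0\<close> \<open>\<not> E a5 a0\<close> by auto
  moreover have "a3 \<noteq> a6" using \<open>E a3 a0\<close> \<open>\<not> E a6 a0\<close> by auto
  moreover have "a4 \<noteq> a5" using \<open>E a4 a5\<close> irr by auto
  moreover have "a4 \<noteq> a6" using \<open>E a4 a3\<close> \<open>\<not> E a6 a3\<close> by auto
  moreover have "a5 \<noteq> a6" using \<open>E a6 a1\<close> \<open>\<not> E a5 a1\<close> by auto
  ultimately have d: "distinct [a0,a1,a2,a3,a4,a5,a6]" by simp
  have "has_induced V E 7 X3"
    unfolding has_induced_def
    apply (rule exI[of _ "\<lambda>k. [a0,a1,a2,a3,a4,a5,a6] ! k"])
    using inj7[OF d] F inV irr by (simp add: all_less_7 ball_less_7 X3_def edges_of_def image_subset_iff)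
  with ab show False unfolding almost_bip_perm_def by blast
qed

lemma mod_eq_small:
  fixes a b :: int
  assumes "\<bar>a - b\<bar> < M" "a mod M = b mod M"
  shows "a = b"
proof (rule ccontr)
  assume "a \<noteq> b"
  from assms(2) have "M dvd (a - b)" by (simp add: mod_eq_dvd_iff)
  then have "\<bar>M\<bar> \<le> \<bar>a - b\<bar>" using \<open>a \<noteq> b\<close> by (simp add: dvd_imp_le_int)
  with assms(1) show False by linarith
qed

locale G =
  fixes V :: "'a set" and E :: "'a \<Rightarrow> 'a \<Rightarrow> bool" and c :: "nat \<Rightarrow> 'a" and m :: nat
  assumes sg: "simple_graph V E" and ab: "almost_bip_perm V E" and sh: "shortest_hole V E c m"
begin

abbreviation cy :: "int \<Rightarrow> 'a" where "cy t \<equiv> cyc c m t"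
abbreviation CC where "CC \<equiv> c ` {0..<m}"

lemma Esym: "E x y \<Longrightarrow> E y x" and Eirr: "\<not> E x x" and EV: "E x y \<Longrightarrow> x \<in> V"
  using sg unfolding simple_graph_def by blast+

lemma Eiff: "E x y \<longleftrightarrow> E y x" using Esym by blast

lemma lt3: "(i::nat) < 3 \<longleftrightarrow> i = 0 \<or> i = 1 \<or> i = 2" by auto

lemma triangle: "E x y \<Longrightarrow> E y z \<Longrightarrow> E x z \<Longrightarrow> False"
proof -
  assume a: "E x y" "E y z" "E x z"
  have d: "distinct [x, y, z]" using a Eirr by auto
  have V: "x \<in> V" "y \<in> V" "z \<in> V" using a EV Esym by blast+
  have s: "E y x" "E z y" "E z x" using a Esym by blast+
  have "has_induced V E 3 (cycle_graph 3)"
    unfolding has_induced_def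
  proof (intro exI conjI)
    show "inj_on (\<lambda>k. [x,y,z] ! k) {0..<3}" by (rule inj_on_nth) (use d in auto)
    show "(\<lambda>k. [x,y,z] ! k) ` {0..<3} \<subseteq> V" using V by (auto simp: lt3)
    show "\<forall>i<3. \<forall>j<3. E ([x,y,z] ! i) ([x,y,z] ! j) = cycle_graph 3 i j"
      unfolding lt3 using a s Eirr by (auto simp: cycle_graph_def)
  qed
  with ab show False unfolding almost_bip_perm_def by blast
qed

lemma hole: "is_hole V E c m" using sh unfolding shortest_hole_def by blast
lemma hole_min: "is_hole V E f n \<Longrightarrow> m \<le> n" using sh unfolding shortest_hole_def by blast

lemma m10: "m \<ge> 10"
proof (rule ccontr)
  assume "\<not> m \<ge> 10"
  moreover have "m \<ge> 5" using hole unfolding is_hole_def by blast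
  moreover have "has_induced V E m (cycle_graph m)" using hole unfolding is_hole_def has_induced_def by blast
  ultimately show False using ab unfolding almost_bip_perm_def by auto
qed

lemma m0: "int m > 0" using m10 by simp

lemma cinj: "inj_on c {0..<m}" and cV: "c ` {0..<m} \<subseteq> V"
  and cadj: "\<And>i j. i<m \<Longrightarrow> j<m \<Longrightarrow> E (c i) (c j) \<longleftrightarrow> cycle_graph m i j"
  using hole unfolding is_hole_def by blast+

lemma idx: "nat (t mod int m) < m" using m0
  by (metis nat_less_iff pos_mod_bound pos_mod_sign)

lemma cyV: "cy t \<in> V" using cV idx unfolding cyc_def by auto
lemma cyC: "cy t \<in> CC" using idx unfolding cyc_def by auto
lemma Ccy: "x \<in> CC \<Longrightarrow> \<exists>t. x = cy t"
proof -
  assume "x \<in> CC" then obtain k where "k < m" "x = c k" by auto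
  then have "x = cy (int k)" unfolding cyc_def by simp
  then show ?thesis by blast
qed

lemma cy_eq: "cy p = cy q \<longleftrightarrow> p mod int m = q mod int m"
proof
  assume "cy p = cy q"
  then have "nat (p mod int m) = nat (q mod int m)" using cinj idx unfolding cyc_def inj_on_def by auto
  then show "p mod int m = q mod int m" using m0 by (simp add: nat_eq_iff2)
qed (simp add: cyc_def)

lemma cy_eq_small: "\<bar>p - q\<bar> < int m \<Longrightarrow> cy p = cy q \<longleftrightarrow> p = q"
  using cy_eq mod_eq_small by blast

lemma cy_suc_aux: "nat (b mod int m) = Suc (nat (a mod int m)) mod m \<longleftrightarrow> b mod int m = (a + 1) mod int m"
proof -
  have "int (Suc (nat (a mod int m)) mod m) = (a mod int m + 1) mod int m"
    using m0 by (simp add: zmod_int ac_simps)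
  also have "\<dots> = (a + 1) mod int m" by (simp add: mod_simps)
  finally have e: "int (Suc (nat (a mod int m)) mod m) = (a + 1) mod int m" .
  show ?thesis
    using e m0 by (metis int_nat_eq nat_int pos_mod_sign)
qed

lemma cy_adj: "E (cy p) (cy q) \<longleftrightarrow> (q mod int m = (p + 1) mod int m \<or> p mod int m = (q + 1) mod int m)"
proof -
  have "E (cy p) (cy q) \<longleftrightarrow> cycle_graph m (nat (p mod int m)) (nat (q mod int m))"
    unfolding cyc_def using cadj idx by blast
  also have "\<dots> \<longleftrightarrow> (nat (q mod int m) = Suc (nat (p mod int m)) mod m \<or> nat (p mod int m) = Suc (nat (q mod int m)) mod m)"
    using idx unfolding cycle_graph_def by blast
  finally show ?thesis by (simp only: cy_suc_aux)
qed

lemma cy_adj_small: "\<bar>p - q\<bar> \<le> int m - 2 \<Longrightarrow> E (cy p) (cy q) \<longleftrightarrow> \<bar>p - q\<bar> = 1"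
proof -
  assume h: "\<bar>p - q\<bar> \<le> int m - 2"
  have "q mod int m = (p + 1) mod int m \<longleftrightarrow> q = p + 1"
    using mod_eq_small[of q "p+1" "int m"] h by auto
  moreover have "p mod int m = (q + 1) mod int m \<longleftrightarrow> p = q + 1"
    using mod_eq_small[of p "q+1" "int m"] h by auto
  ultimately show ?thesis using cy_adj by auto
qed

lemma cy_mod: "cy (p mod int m) = cy p" by (simp add: cy_eq)

lemma cy_adj_next: "E (cy p) (cy (p + 1))" "E (cy (p+1)) (cy p)"
  using cy_adj by auto

lemma Aset_iff: "u \<in> Aset V E c m i \<longleftrightarrow> u \<in> V \<and> (\<forall>t. E u (cy t) \<longleftrightarrow> (cy t = cy (i - 1) \<or> cy t = cy (i + 1)))"
proof -
  have "nbhd E u \<inter> CC = {cy (i - 1), cy (i + 1)} \<longleftrightarrow> (\<forall>t. E u (cy t) \<longleftrightarrow> (cy t = cy (i - 1) \<or> cy t = cy (i + 1)))"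
    (is "?l \<longleftrightarrow> ?r")
  proof
    assume ?l then show ?r using cyC unfolding nbhd_def by blast
  next
    assume r: ?r
    show ?l
    proof (rule set_eqI)
      fix x show "x \<in> nbhd E u \<inter> CC \<longleftrightarrow> x \<in> {cy (i - 1), cy (i + 1)}"
      proof (cases "x \<in> CC")
        case True
        then obtain t where "x = cy t" using Ccy by blast
        then show ?thesis using r cyC unfolding nbhd_def by auto
      next
        case False
        then show ?thesis using cyC by auto
      qed
    qed
  qed
  then show ?thesis unfolding Aset_def by blast
qed

lemma Bset_iff: "u \<in> Bset V E c m i \<longleftrightarrow> u \<in> V \<and> (\<forall>t. E u (cy t) \<longleftrightarrow> cy t = cy i)"
proof -
  have "nbhd E u \<inter> CC = {cy i} \<longleftrightarrow> (\<forall>t. E u (cy t) \<longleftrightarrow> cy t = cy i)"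
    (is "?l \<longleftrightarrow> ?r")
  proof
    assume ?l then show ?r using cyC unfolding nbhd_def by blast
  next
    assume r: ?r
    show ?l
    proof (rule set_eqI)
      fix x show "x \<in> nbhd E u \<inter> CC \<longleftrightarrow> x \<in> {cy i}"
      proof (cases "x \<in> CC")
        case True
        then obtain t where "x = cy t" using Ccy by blast
        then show ?thesis using r cyC unfolding nbhd_def by auto
      next
        case False
        then show ?thesis using cyC by auto
      qed
    qed
  qed
  then show ?thesis unfolding Bset_def by blast
qed

lemma A_adj: "u \<in> Aset V E c m i \<Longrightarrow> E u (cy t) \<longleftrightarrow> (cy t = cy (i - 1) \<or> cy t = cy (i + 1))"
  using Aset_iff by blast
lemma B_adj: "u \<in> Bset V E c m i \<Longrightarrow> E u (cy t) \<longleftrightarrow> cy t = cy i"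
  using Bset_iff by blast

lemma B_notC: "u \<in> Bset V E c m i \<Longrightarrow> u \<notin> CC"
proof
  assume u: "u \<in> Bset V E c m i" "u \<in> CC"
  then obtain t where t: "u = cy t" using Ccy by blast
  have "cy (t+1) = cy i" "cy (t - 1) = cy i" using B_adj[OF u(1)] t cy_adj_next[of t] cy_adj_next[of "t-1"] Esym by auto
  then have "cy (t+1) = cy (t - 1)" by simp
  then show False using m10 by (simp add: cy_eq_small)
qed

lemma A_C: "u \<in> Aset V E c m i \<Longrightarrow> u \<in> CC \<Longrightarrow> u = cy i"
proof -
  assume u: "u \<in> Aset V E c m i" "u \<in> CC"
  then obtain t where t: "u = cy t" using Ccy by blast
  have a: "cy (t+1) = cy (i - 1) \<or> cy (t+1) = cy (i + 1)" "cy (t - 1) = cy (i - 1) \<or> cy (t - 1) = cy (i + 1)"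
    using A_adj[OF u(1)] t cy_adj_next[of t] cy_adj_next[of "t-1"] Esym by auto
  have "(t+1) mod int m = (i - 1) mod int m \<or> (t+1) mod int m = (i + 1) mod int m"
       "(t - 1) mod int m = (i - 1) mod int m \<or> (t - 1) mod int m = (i + 1) mod int m"
    using a by (simp_all add: cy_eq)
  then have "t mod int m = i mod int m"
  proof (elim disjE)
    assume "(t+1) mod int m = (i - 1) mod int m" "(t - 1) mod int m = (i + 1) mod int m"
    then have "((t+1) - (t - 1)) mod int m = ((i - 1) - (i + 1)) mod int m" by (metis mod_diff_cong)
    then have "2 mod int m = (-2) mod int m" by simp
    then have "(2::int) = -2" using mod_eq_small[of 2 "-2" "int m"] m10 by simp
    then show ?thesis by simp
  next
    assume "(t+1) mod int m = (i - 1) mod int m" "(t - 1) mod int m = (i - 1) mod int m"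
    then have "((t+1) - (t - 1)) mod int m = ((i - 1) - (i - 1)) mod int m" by (metis mod_diff_cong)
    then have "2 mod int m = 0 mod int m" by simp
    then have "(2::int) = 0" using mod_eq_small[of 2 "0" "int m"] m10 by simp
    then show ?thesis by simp
  next
    assume "(t+1) mod int m = (i + 1) mod int m"
    then have "((t+1) - 1) mod int m = ((i + 1) - 1) mod int m" by (metis mod_diff_cong)
    then show ?thesis by simp
  next
    assume "(t+1) mod int m = (i + 1) mod int m"
    then have "((t+1) - 1) mod int m = ((i + 1) - 1) mod int m" by (metis mod_diff_cong)
    then show ?thesis by simp
  qed
  then show ?thesis using t cy_eq by simp
qed

end

context G begin

lemma seg1:
  fixes k :: nat
  assumes y: "y \<in> V" "y \<notin> CC" and k: "3 \<le> k" "k + 1 < m"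
    and adj: "\<And>t. t \<le> k \<Longrightarrow> E y (cy (a + int t)) \<longleftrightarrow> (t = 0 \<or> t = k)"
  shows "m \<le> k + 2"
proof -
  define f where "f = (\<lambda>t. if t \<le> k then cy (a + int t) else y)"
  have "is_hole V E f (k + 2)"
    unfolding is_hole_def
  proof (intro conjI)
    show "5 \<le> k + 2" using k by simp
    show "inj_on f {0..<k + 2}"
    proof (rule inj_onI)
      fix s t assume st: "s \<in> {0..<k+2}" "t \<in> {0..<k+2}" "f s = f t"
      show "s = t"
      proof (cases "s \<le> k"; cases "t \<le> k")
        assume "s \<le> k" "t \<le> k"
        then have "cy (a + int s) = cy (a + int t)" using st unfolding f_def by simp
        moreover have "\<bar>(a + int s) - (a + int t)\<bar> < int m" using \<open>s \<le> k\<close> \<open>t \<le> k\<close> k by simp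
        ultimately show ?thesis using cy_eq_small by simp
      next
        assume "s \<le> k" "\<not> t \<le> k" then show ?thesis using st y cyC unfolding f_def by (metis)
      next
        assume "\<not> s \<le> k" "t \<le> k" then show ?thesis using st y cyC unfolding f_def by (metis)
      next
        assume "\<not> s \<le> k" "\<not> t \<le> k" then show ?thesis using st by simp
      qed
    qed
    show "f ` {0..<k + 2} \<subseteq> V" using y cyV unfolding f_def by auto
    show "\<forall>s<k + 2. \<forall>t<k + 2. E (f s) (f t) = cycle_graph (k + 2) s t"
    proof (intro allI impI)
      fix s t assume st: "s < k + 2" "t < k + 2"
      show "E (f s) (f t) = cycle_graph (k + 2) s t"
      proof (cases "s \<le> k"; cases "t \<le> k")
        assume a: "s \<le> k" "t \<le> k"
        have "\<bar>(a + int s) - (a + int t)\<bar> \<le> int m - 2" using a k by simp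
        then have "E (f s) (f t) \<longleftrightarrow> \<bar>(a + int s) - (a + int t)\<bar> = 1" unfolding f_def using a cy_adj_small by simp
        also have "\<dots> \<longleftrightarrow> cycle_graph (k + 2) s t" using a unfolding cycle_graph_def by auto
        finally show ?thesis .
      next
        assume a: "s \<le> k" "\<not> t \<le> k"
        then have t: "t = k + 1" using st by simp
        have "E (f s) (f t) \<longleftrightarrow> E y (cy (a + int s))" unfolding f_def using a Eiff by auto
        also have "\<dots> \<longleftrightarrow> s = 0 \<or> s = k" using adj a by simp
        also have "\<dots> \<longleftrightarrow> cycle_graph (k + 2) s t" using a t k unfolding cycle_graph_def by auto
        finally show ?thesis .
      next
        assume a: "\<not> s \<le> k" "t \<le> k"
        then have s: "s = k + 1" using st by simp
        have "E (f s) (f t) \<longleftrightarrow> E y (cy (a + int t))" unfolding f_def using a by auto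
        also have "\<dots> \<longleftrightarrow> t = 0 \<or> t = k" using adj a by simp
        also have "\<dots> \<longleftrightarrow> cycle_graph (k + 2) s t" using a s k unfolding cycle_graph_def by auto
        finally show ?thesis .
      next
        assume a: "\<not> s \<le> k" "\<not> t \<le> k"
        then have "s = k + 1" "t = k + 1" using st by auto
        then show ?thesis unfolding f_def using Eirr unfolding cycle_graph_def by auto
      qed
    qed
  qed
  then show ?thesis using hole_min by blast
qed

lemma seg2:
  fixes k :: nat
  assumes y: "y1 \<in> V" "y1 \<notin> CC" "y2 \<in> V" "y2 \<notin> CC" "E y1 y2" and k: "2 \<le> k" "k + 1 < m"
    and adj1: "\<And>t. t \<le> k \<Longrightarrow> E y1 (cy (a + int t)) \<longleftrightarrow> t = k"
    and adj2: "\<And>t. t \<le> k \<Longrightarrow> E y2 (cy (a + int t)) \<longleftrightarrow> t = 0"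
  shows "m \<le> k + 3"
proof -
  define f where "f = (\<lambda>t. if t \<le> k then cy (a + int t) else if t = k + 1 then y1 else y2)"
  have y12: "y1 \<noteq> y2" using y Eirr by metis
  have m3: "Suc (Suc (Suc k)) mod (k + 3) = 0" by (simp add: numeral_eq_Suc)
  have "is_hole V E f (k + 3)"
    unfolding is_hole_def
  proof (intro conjI)
    show "5 \<le> k + 3" using k by simp
    show "inj_on f {0..<k + 3}"
    proof (rule inj_onI)
      fix s t assume st: "s \<in> {0..<k+3}" "t \<in> {0..<k+3}" "f s = f t"
      show "s = t"
      proof (cases "s \<le> k"; cases "t \<le> k")
        assume "s \<le> k" "t \<le> k"
        then have "cy (a + int s) = cy (a + int t)" using st unfolding f_def by simp
        moreover have "\<bar>(a + int s) - (a + int t)\<bar> < int m" using \<open>s \<le> k\<close> \<open>t \<le> k\<close> k by simp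
        ultimately show ?thesis using cy_eq_small by simp
      next
        assume "s \<le> k" "\<not> t \<le> k" then show ?thesis using st y cyC unfolding f_def by (metis)
      next
        assume "\<not> s \<le> k" "t \<le> k" then show ?thesis using st y cyC unfolding f_def by (metis)
      next
        assume "\<not> s \<le> k" "\<not> t \<le> k" then show ?thesis using st y12 unfolding f_def
          by (auto split: if_splits)
      qed
    qed
    show "f ` {0..<k + 3} \<subseteq> V" using y cyV unfolding f_def by auto
    show "\<forall>s<k + 3. \<forall>t<k + 3. E (f s) (f t) = cycle_graph (k + 3) s t"
    proof (intro allI impI)
      fix s t assume st: "s < k + 3" "t < k + 3"
      show "E (f s) (f t) = cycle_graph (k + 3) s t"
      proof (cases "s \<le> k"; cases "t \<le> k")
        assume a: "s \<le> k" "t \<le> k"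
        have "\<bar>(a + int s) - (a + int t)\<bar> \<le> int m - 2" using a k by simp
        then have "E (f s) (f t) \<longleftrightarrow> \<bar>(a + int s) - (a + int t)\<bar> = 1" unfolding f_def using a cy_adj_small by simp
        also have "\<dots> \<longleftrightarrow> cycle_graph (k + 3) s t" using a unfolding cycle_graph_def by auto
        finally show ?thesis .
      next
        assume a: "s \<le> k" "\<not> t \<le> k"
        then have t: "t = k + 1 \<or> t = k + 2" using st by auto
        then show ?thesis
        proof
          assume t: "t = k + 1"
          have "E (f s) (f t) \<longleftrightarrow> E y1 (cy (a + int s))" unfolding f_def using a t Eiff by auto
          also have "\<dots> \<longleftrightarrow> s = k" using adj1 a by simp
          also have "\<dots> \<longleftrightarrow> cycle_graph (k + 3) s t" using a t k m3 unfolding cycle_graph_def by auto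
          finally show ?thesis .
        next
          assume t: "t = k + 2"
          have "E (f s) (f t) \<longleftrightarrow> E y2 (cy (a + int s))" unfolding f_def using a t Eiff by auto
          also have "\<dots> \<longleftrightarrow> s = 0" using adj2 a by simp
          also have "\<dots> \<longleftrightarrow> cycle_graph (k + 3) s t" using a t k m3 unfolding cycle_graph_def by auto
          finally show ?thesis .
        qed
      next
        assume a: "\<not> s \<le> k" "t \<le> k"
        then have s: "s = k + 1 \<or> s = k + 2" using st by auto
        then show ?thesis
        proof
          assume s: "s = k + 1"
          have "E (f s) (f t) \<longleftrightarrow> E y1 (cy (a + int t))" unfolding f_def using a s by auto
          also have "\<dots> \<longleftrightarrow> t = k" using adj1 a by simp
          also have "\<dots> \<longleftrightarrow> cycle_graph (k + 3) s t" using a s k m3 unfolding cycle_graph_def by auto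
          finally show ?thesis .
        next
          assume s: "s = k + 2"
          have "E (f s) (f t) \<longleftrightarrow> E y2 (cy (a + int t))" unfolding f_def using a s by auto
          also have "\<dots> \<longleftrightarrow> t = 0" using adj2 a by simp
          also have "\<dots> \<longleftrightarrow> cycle_graph (k + 3) s t" using a s k m3 unfolding cycle_graph_def by auto
          finally show ?thesis .
        qed
      next
        assume a: "\<not> s \<le> k" "\<not> t \<le> k"
        then have "s = k + 1 \<or> s = k + 2" "t = k + 1 \<or> t = k + 2" using st by auto
        then show ?thesis unfolding f_def using Eirr y(5) Esym[OF y(5)] m3 unfolding cycle_graph_def by auto
      qed
    qed
  qed
  then show ?thesis using hole_min by blast
qed

end

context G begin

lemma cy_off: "\<exists>k. k < m \<and> cy t = cy (a + int k)"
proof -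
  define k where "k = nat ((t - a) mod int m)"
  have "k < m" unfolding k_def using idx[of "t - a"] by simp
  moreover have "int k = (t - a) mod int m" unfolding k_def using m0 by simp
  then have "cy (a + int k) = cy t" by (simp add: cy_eq mod_simps)
  ultimately show ?thesis by metis
qed

lemma cyE: "\<bar>p - q\<bar> \<le> int m - 2 \<Longrightarrow> E (cy p) (cy q) \<longleftrightarrow> \<bar>p - q\<bar> = 1" by (rule cy_adj_small)

lemma nn:
  assumes x: "x \<in> V" "x \<notin> CC" "E x (cy a)" and oth: "E x (cy t)" "cy t \<noteq> cy a"
  shows "\<exists>k::nat. (k = 2 \<or> k = m - 2) \<and> E x (cy (a + int k)) \<and> (\<forall>k'. 0 < k' \<and> k' < k \<longrightarrow> \<not> E x (cy (a + int k')))"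
proof -
  define S where "S = {k::nat. 0 < k \<and> k < m \<and> E x (cy (a + int k))}"
  obtain kt where kt: "kt < m" "cy t = cy (a + int kt)" using cy_off by blast
  have "kt \<noteq> 0"
  proof
    assume "kt = 0" then show False using kt oth by simp
  qed
  then have "kt \<in> S" unfolding S_def using kt oth \<open>kt \<noteq> 0\<close> by auto
  define k0 where "k0 = (LEAST k. k \<in> S)"
  have k0S: "k0 \<in> S" unfolding k0_def using \<open>kt \<in> S\<close> by (rule LeastI)
  have k0min: "\<And>k'. 0 < k' \<Longrightarrow> k' < k0 \<Longrightarrow> \<not> E x (cy (a + int k'))"
  proof
    fix k' assume h: "0 < k'" "k' < k0" "E x (cy (a + int k'))"
    have "k0 < m" using k0S unfolding S_def by simp
    then have "k' \<in> S" using h unfolding S_def by simp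
    then have "k0 \<le> k'" unfolding k0_def by (rule Least_le)
    with h show False by simp
  qed
  have k0: "0 < k0" "k0 < m" "E x (cy (a + int k0))" using k0S unfolding S_def by auto
  have "k0 \<noteq> 1"
  proof
    assume "k0 = 1"
    then have "E x (cy (a + 1))" using k0 by simp
    then show False using triangle[OF x(3) cy_adj_next(1)[of a]] by blast
  qed
  have "k0 \<noteq> m - 1"
  proof
    assume h: "k0 = m - 1"
    have "E (cy a) (cy (a + int k0))" unfolding cy_adj using h m0 by (simp add: of_nat_diff mod_simps)
    then show False using triangle[OF x(3) _ k0(3)] by blast
  qed
  have "k0 = 2 \<or> k0 = m - 2"
  proof (rule ccontr)
    assume h: "\<not> (k0 = 2 \<or> k0 = m - 2)"
    then have h3: "3 \<le> k0" "k0 + 1 < m" using k0 \<open>k0 \<noteq> 1\<close> \<open>k0 \<noteq> m - 1\<close> by auto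
    have "m \<le> k0 + 2"
    proof (rule seg1[OF x(1,2) h3])
      fix t assume "t \<le> k0"
      then show "E x (cy (a + int t)) \<longleftrightarrow> (t = 0 \<or> t = k0)"
        using k0min[of t] k0 x(3) by (cases "t = 0"; cases "t = k0") auto
    qed
    then show False using h h3 by simp
  qed
  then show ?thesis using k0 k0min by blast
qed

lemma last_gap:
  assumes x: "x \<in> V" "x \<notin> CC" "E x (cy b)"
    and k: "E x (cy (b + int (m - 2)))" "\<forall>k'. 0 < k' \<and> k' < m - 2 \<longrightarrow> \<not> E x (cy (b + int k'))"
  shows "x \<in> Aset V E c m (b - 1)"
  unfolding Aset_iff
proof (intro conjI allI)
  show "x \<in> V" by fact
  fix t
  obtain k where kk: "k < m" "cy t = cy (b + int k)" using cy_off by blast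
  have "b + int (m - 2) = (b - 1 - 1) + int m" using m10 by (simp add: of_nat_diff)
  then have "cy (b + int (m - 2)) = cy ((b - 1 - 1) + int m)" by (rule arg_cong)
  also have "\<dots> = cy (b - 1 - 1)" by (simp only: cy_eq mod_add_self2)
  finally have e1: "cy (b - 1 - 1) = cy (b + int (m - 2))" by simp
  have e2: "cy (b - 1 + 1) = cy (b + int 0)" by simp
  have ne: "cy (b + int k) = cy (b + int j) \<longleftrightarrow> k = j" if "j < m" for j
    using cy_eq_small[of "b + int k" "b + int j"] kk that by auto
  have "k = m - 1 \<Longrightarrow> \<not> E x (cy (b + int k))"
  proof
    assume "k = m - 1" "E x (cy (b + int k))"
    moreover have "E (cy b) (cy (b + int (m - 1)))" unfolding cy_adj using m0 by (simp add: of_nat_diff mod_simps)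
    ultimately show False using triangle[OF x(3)] by blast
  qed
  then have "E x (cy (b + int k)) \<longleftrightarrow> k = 0 \<or> k = m - 2"
    using k x(3) kk(1) by (cases "k = 0"; cases "k = m - 2"; cases "k = m - 1") auto
  then show "E x (cy t) = (cy t = cy (b - 1 - 1) \<or> cy t = cy (b - 1 + 1))"
    unfolding kk(2) e1 e2 using ne[of 0] ne[of "m - 2"] m10 by auto
qed

lemma classify:
  assumes x: "x \<in> V" "x \<notin> CC" "E x (cy p)"
  shows "x \<in> Bset V E c m p \<or> x \<in> Aset V E c m (p - 1) \<or> x \<in> Aset V E c m (p + 1)"
proof (cases "\<exists>t. E x (cy t) \<and> cy t \<noteq> cy p")
  case False
  then have "x \<in> Bset V E c m p" unfolding Bset_iff using x by metis
  then show ?thesis by blast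
next
  case True
  then obtain t where t: "E x (cy t)" "cy t \<noteq> cy p" by blast
  from nn[OF x t] obtain k where k: "k = 2 \<or> k = m - 2" "E x (cy (p + int k))"
    "\<forall>k'. 0 < k' \<and> k' < k \<longrightarrow> \<not> E x (cy (p + int k'))" by blast
  show ?thesis
  proof (cases "k = m - 2")
    case True
    then have "x \<in> Aset V E c m (p - 1)" using last_gap[OF x] k by blast
    then show ?thesis by blast
  next
    case False
    then have k2: "k = 2" using k by blast
    then have x2: "E x (cy (p + 2))" using k by simp
    have "cy p \<noteq> cy (p + 2)" using m10 by (simp add: cy_eq_small)
    from nn[OF x(1,2) x2 x(3) this] obtain k1 where k1: "k1 = 2 \<or> k1 = m - 2" "E x (cy (p + 2 + int k1))"
      "\<forall>k'. 0 < k' \<and> k' < k1 \<longrightarrow> \<not> E x (cy (p + 2 + int k'))" by blast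
    show ?thesis
    proof (cases "k1 = m - 2")
      case True
      then have "x \<in> Aset V E c m (p + 2 - 1)" using last_gap[OF x(1,2) x2] k1 by blast
      then show ?thesis by (simp add: algebra_simps)
    next
      case False
      then have x4: "E x (cy (p + 4))" using k1 by (simp add: ac_simps)
      have "cy p \<noteq> cy (p + 4)" using m10 by (simp add: cy_eq_small)
      from nn[OF x(1,2) x4 x(3) this] obtain k2 where k2: "k2 = 2 \<or> k2 = m - 2" "E x (cy (p + 4 + int k2))"
        "\<forall>k'. 0 < k' \<and> k' < k2 \<longrightarrow> \<not> E x (cy (p + 4 + int k'))" by blast
      have "k2 \<noteq> m - 2"
      proof
        assume h: "k2 = m - 2"
        have "p + 4 + int (m - 4) = p + int m" using m10 by (simp add: of_nat_diff)
        then have "cy (p + 4 + int (m - 4)) = cy (p + int m)" by (rule arg_cong)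
        also have "\<dots> = cy p" by (simp only: cy_eq mod_add_self2)
        finally have "cy (p + 4 + int (m - 4)) = cy p" .
        moreover have "0 < m - 4" "m - 4 < k2" using h m10 by auto
        ultimately show False using k2(3) x(3) by metis
      qed
      then have x6: "E x (cy (p + 6))" using k2 by (simp add: ac_simps)
      have "E (cy p) (cy (p - 1))" "E (cy (p + 4)) (cy (p + 3))" "E (cy (p + 6)) (cy (p + 7))"
        using m10 by (simp_all add: cyE)
      then have n1: "\<not> E x (cy (p - 1))" and n2: "\<not> E x (cy (p + 3))" and n3: "\<not> E x (cy (p + 7))"
        using triangle x(3) x4 x6 by blast+
      have False
        apply (rule T2_contra[OF sg ab, of x "cy p" "cy (p - 1)" "cy (p + 4)" "cy (p + 3)" "cy (p + 6)" "cy (p + 7)"])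
        using x(3) x4 x6 n1 n2 n3 m10 by (simp_all add: cyE)
      then show ?thesis ..
    qed
  qed
qed

end

context G begin

abbreviation A where "A i \<equiv> Aset V E c m i"
abbreviation B where "B i \<equiv> Bset V E c m i"

lemma A_props: "u \<in> A i \<Longrightarrow> E u (cy (i - 1)) \<and> E u (cy (i + 1)) \<and> \<not> E u (cy (i - 2)) \<and> \<not> E u (cy (i + 2)) \<and> \<not> E u (cy i)"
  using m10 by (simp add: A_adj cy_eq_small)

lemma B_props: "w \<in> B i \<Longrightarrow> E w (cy i) \<and> \<not> E w (cy (i - 1)) \<and> \<not> E w (cy (i + 1)) \<and> \<not> E w (cy (i - 2)) \<and> \<not> E w (cy (i + 2))"
  using m10 by (simp add: B_adj cy_eq_small)

lemma Lp: "x \<in> B (i - 2) \<union> A (i - 1) \<Longrightarrow> E x (cy (i - 2)) \<and> \<not> E x (cy (i - 1)) \<and> \<not> E x (cy (i + 1)) \<and> \<not> E x (cy (i + 2))"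
  using m10 by (auto simp add: A_adj B_adj cy_eq_small)

lemma Rp: "x \<in> A (i + 1) \<union> B (i + 2) \<Longrightarrow> E x (cy (i + 2)) \<and> \<not> E x (cy (i + 1)) \<and> \<not> E x (cy (i - 1)) \<and> \<not> E x (cy (i - 2))"
  using m10 by (auto simp add: A_adj B_adj cy_eq_small)

lemma Lp': "x \<in> A (i - 2) \<union> B (i - 1) \<Longrightarrow> E x (cy (i - 1)) \<and> \<not> E x (cy i) \<and> \<not> E x (cy (i + 1)) \<and> \<not> E x (cy (i + 2)) \<and> \<not> E x (cy (i - 2))"
  using m10 by (auto simp add: A_adj B_adj cy_eq_small)

lemma Rp': "x \<in> B (i + 1) \<union> A (i + 2) \<Longrightarrow> E x (cy (i + 1)) \<and> \<not> E x (cy i) \<and> \<not> E x (cy (i - 1)) \<and> \<not> E x (cy (i - 2)) \<and> \<not> E x (cy (i + 2))"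
  using m10 by (auto simp add: A_adj B_adj cy_eq_small)

lemma cy_m: "p = q + int m \<Longrightarrow> cy p = cy q"
  by (simp add: cy_eq)

lemma A_chainL:
  assumes u: "u \<in> A i" "u' \<in> A i" and x: "x \<in> B (i - 2) \<union> A (i - 1)" "y \<in> B (i - 2) \<union> A (i - 1)"
    and e: "E u x" "\<not> E u' x" "E u' y" "\<not> E u y"
  shows False
proof -
  note pu = A_props[OF u(1)] and pu' = A_props[OF u(2)] and px = Lp[OF x(1)] and py = Lp[OF x(2)]
  have nuu: "\<not> E u u'" using triangle pu pu' Esym by blast
  have nxy: "\<not> E x y" using triangle px py Esym by blast
  show False
    apply (rule X2_contra[OF sg ab, of u "cy (i + 1)" u' "cy (i - 1)" x "cy (i + 2)" y])
    using pu pu' px py nuu nxy e m10 by (simp_all add: cyE)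
qed

end

context G begin

lemma cy_eq_diff: "cy p = cy q \<longleftrightarrow> (p - q) mod int m = 0"
  by (simp only: cy_eq mod_eq_dvd_iff dvd_eq_mod_eq_0)

lemma modz: "0 < d \<Longrightarrow> d < 2 * int m \<Longrightarrow> (d mod int m = 0 \<longleftrightarrow> d = int m)"
proof -
  assume d: "0 < d" "d < 2 * int m"
  show ?thesis
  proof
    assume "d mod int m = 0"
    then have "int m dvd d" by (simp only: dvd_eq_mod_eq_0)
    then obtain q where q: "d = int m * q" by (rule dvdE)
    have "q = 1"
    proof -
      have "0 < q" using d q m0 by (simp add: zero_less_mult_iff)
      moreover have "q \<le> 1"
      proof (rule ccontr)
        assume "\<not> q \<le> 1"
        then have "2 \<le> q" by simp
        then have "int m * 2 \<le> int m * q" using m0 mult_left_mono[of 2 q "int m"] by linarith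
        then show False using d q by linarith
      qed
      ultimately show ?thesis by simp
    qed
    then show "d = int m" using q by simp
  qed simp
qed

lemma modz_neg: "0 < d \<Longrightarrow> d < int m \<Longrightarrow> d mod int m \<noteq> 0"
  using modz[of d] m0 by simp

lemma A_chainR:
  assumes u: "u \<in> A i" "u' \<in> A i" and x: "x \<in> A (i + 1) \<union> B (i + 2)" "y \<in> A (i + 1) \<union> B (i + 2)"
    and e: "E u x" "\<not> E u' x" "E u' y" "\<not> E u y"
  shows False
proof -
  note pu = A_props[OF u(1)] and pu' = A_props[OF u(2)] and px = Rp[OF x(1)] and py = Rp[OF x(2)]
  have nuu: "\<not> E u u'" using triangle pu pu' Esym by blast
  have nxy: "\<not> E x y" using triangle px py Esym by blast
  show False
    apply (rule X2_contra[OF sg ab, of u "cy (i - 1)" u' "cy (i + 1)" x "cy (i - 2)" y])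
    using pu pu' px py nuu nxy e m10 by (simp_all add: cyE)
qed

lemma A_cons:
  assumes u: "u \<in> A i" "u' \<in> A i" and x: "x \<in> B (i - 2) \<union> A (i - 1)" "y \<in> A (i + 1) \<union> B (i + 2)"
    and e: "E u x" "\<not> E u' x" "E u y" "\<not> E u' y"
  shows False
proof -
  note pu = A_props[OF u(1)] and pu' = A_props[OF u(2)] and px = Lp[OF x(1)] and py = Rp[OF x(2)]
  have nuu: "\<not> E u u'" using triangle pu pu' Esym by blast
  have nxy: "\<not> E x y" using triangle e Esym by blast
  show False
    apply (rule X3_contra[OF sg ab, of x u "cy (i + 1)" "cy (i - 2)" "cy (i - 1)" u' y])
    using pu pu' px py nuu nxy e m10 by (simp_all add: cyE)
qed

lemma A_nb:
  assumes u: "u \<in> A i" "u' \<in> A i" and e: "E u x" "\<not> E u' x"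
  shows "x \<in> B (i - 2) \<union> A (i - 1) \<union> (A (i + 1) \<union> B (i + 2))"
proof -
  note pu = A_props[OF u(1)] and pu' = A_props[OF u(2)]
  have xV: "x \<in> V" using e EV Esym by blast
  have xC: "x \<notin> CC"
  proof
    assume "x \<in> CC"
    then obtain t where t: "x = cy t" using Ccy by blast
    then show False using e A_adj[OF u(1)] A_adj[OF u(2)] by auto
  qed
  have nuu: "\<not> E u u'" using triangle pu pu' Esym by blast
  have x1: "\<not> E x (cy (i - 1))" "\<not> E x (cy (i + 1))" using triangle e(1) pu Esym by blast+
  consider "\<not> E x (cy (i - 2)) \<and> \<not> E x (cy (i + 2))" | "E x (cy (i + 2))" | "E x (cy (i - 2))" by blast
  then show ?thesis
  proof cases
    case 1
    have False
      apply (rule X2_contra[OF sg ab, of "cy (i - 1)" u "cy (i + 1)" u' "cy (i - 2)" x "cy (i + 2)"])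
      using pu pu' nuu x1 1 e m10 by (simp_all add: cyE)
    then show ?thesis ..
  next
    case 2
    from classify[OF xV xC 2] have "x \<in> B (i + 2) \<or> x \<in> A (i + 1) \<or> x \<in> A (i + 3)"
      by (simp add: algebra_simps)
    moreover have "x \<notin> A (i + 3)"
    proof
      assume xa: "x \<in> A (i + 3)"
      show False
      proof (cases "u \<in> CC")
        case True
        then have "u = cy i" using A_C u(1) by blast
        then have "E x (cy i)" using e(1) Esym by blast
        then have "cy i = cy (i + 3 - 1) \<or> cy i = cy (i + 3 + 1)" using A_adj[OF xa] by blast
        then show False using m10 by (simp add: cy_eq_small)
      next
        case False
        have uV: "u \<in> V" using u(1) unfolding Aset_iff by blast
        have "m \<le> (m - 5) + 3"
        proof (rule seg2[OF uV False xV xC e(1), of "m - 5" "i + 4"])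
          show "2 \<le> m - 5" "m - 5 + 1 < m" using m10 by auto
        next
          fix t assume t: "t \<le> m - 5"
          have tt: "int t + 5 \<le> int m" using t m10 by linarith
          show "E u (cy (i + 4 + int t)) \<longleftrightarrow> t = m - 5"
            using A_adj[OF u(1), of "i + 4 + int t"] t tt m10 by (auto simp: cy_eq_diff modz modz_neg)
        next
          fix t assume t: "t \<le> m - 5"
          have tt: "int t + 5 \<le> int m" using t m10 by linarith
          show "E x (cy (i + 4 + int t)) \<longleftrightarrow> t = 0"
            using A_adj[OF xa, of "i + 4 + int t"] t tt m10 by (auto simp: cy_eq_diff modz modz_neg)
        qed
        then show False using m10 by simp
      qed
    qed
    ultimately show ?thesis by blast
  next
    case 3
    from classify[OF xV xC 3] have "x \<in> B (i - 2) \<or> x \<in> A (i - 3) \<or> x \<in> A (i - 1)"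
      by (simp add: algebra_simps)
    moreover have "x \<notin> A (i - 3)"
    proof
      assume xa: "x \<in> A (i - 3)"
      show False
      proof (cases "u \<in> CC")
        case True
        then have "u = cy i" using A_C u(1) by blast
        then have "E x (cy i)" using e(1) Esym by blast
        then have "cy i = cy (i - 3 - 1) \<or> cy i = cy (i - 3 + 1)" using A_adj[OF xa] by blast
        then show False using m10 by (simp add: cy_eq_small)
      next
        case False
        have uV: "u \<in> V" using u(1) unfolding Aset_iff by blast
        have "m \<le> (m - 5) + 3"
        proof (rule seg2[OF xV xC uV False Esym[OF e(1)], of "m - 5" "i + 1"])
          show "2 \<le> m - 5" "m - 5 + 1 < m" using m10 by auto
        next
          fix t assume t: "t \<le> m - 5"
          have tt: "int t + 5 \<le> int m" using t m10 by linarith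
          show "E x (cy (i + 1 + int t)) \<longleftrightarrow> t = m - 5"
            using A_adj[OF xa, of "i + 1 + int t"] t tt m10 by (auto simp: cy_eq_diff modz modz_neg)
        next
          fix t assume t: "t \<le> m - 5"
          have tt: "int t + 5 \<le> int m" using t m10 by linarith
          show "E u (cy (i + 1 + int t)) \<longleftrightarrow> t = 0"
            using A_adj[OF u(1), of "i + 1 + int t"] t tt m10 by (auto simp: cy_eq_diff modz modz_neg)
        qed
        then show False using m10 by simp
      qed
    qed
    ultimately show ?thesis by blast
  qed
qed

end

context G begin

lemma B_chainL:
  assumes w: "w \<in> B i" "w' \<in> B i" and x: "x \<in> A (i - 2) \<union> B (i - 1)" "y \<in> A (i - 2) \<union> B (i - 1)"
    and e: "E w x" "\<not> E w' x" "E w' y" "\<not> E w y"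
  shows False
proof -
  note pw = B_props[OF w(1)] and pw' = B_props[OF w(2)] and px = Lp'[OF x(1)] and py = Lp'[OF x(2)]
  have nww: "\<not> E w w'" using triangle pw pw' Esym by blast
  have nxy: "\<not> E x y" using triangle px py Esym by blast
  show False
    apply (rule T2_contra[OF sg ab, of "cy i" w x w' y "cy (i + 1)" "cy (i + 2)"])
    using pw pw' px py nww nxy e m10 by (simp_all add: cyE)
qed

lemma B_chainR:
  assumes w: "w \<in> B i" "w' \<in> B i" and x: "x \<in> B (i + 1) \<union> A (i + 2)" "y \<in> B (i + 1) \<union> A (i + 2)"
    and e: "E w x" "\<not> E w' x" "E w' y" "\<not> E w y"
  shows False
proof -
  note pw = B_props[OF w(1)] and pw' = B_props[OF w(2)] and px = Rp'[OF x(1)] and py = Rp'[OF x(2)]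
  have nww: "\<not> E w w'" using triangle pw pw' Esym by blast
  have nxy: "\<not> E x y" using triangle px py Esym by blast
  show False
    apply (rule T2_contra[OF sg ab, of "cy i" w x w' y "cy (i - 1)" "cy (i - 2)"])
    using pw pw' px py nww nxy e m10 by (simp_all add: cyE)
qed

lemma B_cons:
  assumes w: "w \<in> B i" "w' \<in> B i" and x: "x \<in> A (i - 2) \<union> B (i - 1)" "y \<in> B (i + 1) \<union> A (i + 2)"
    and e: "E w x" "\<not> E w' x" "E w y" "\<not> E w' y"
  shows False
proof -
  note pw = B_props[OF w(1)] and pw' = B_props[OF w(2)] and px = Lp'[OF x(1)] and py = Rp'[OF x(2)]
  have nww: "\<not> E w w'" using triangle pw pw' Esym by blast
  have nxy: "\<not> E x y" using triangle e Esym by blast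
  show False
    apply (rule X3_contra[OF sg ab, of "cy (i - 1)" "cy i" "cy (i + 1)" x w y w'])
    using pw pw' px py nww nxy e m10 by (simp_all add: cyE)
qed

lemma small3: "t \<le> (2::nat) \<Longrightarrow> P 0 \<Longrightarrow> P 1 \<Longrightarrow> P 2 \<Longrightarrow> P t"
proof -
  assume "t \<le> 2" "P 0" "P 1" "P 2"
  moreover have "t = 0 \<or> t = 1 \<or> t = 2" using \<open>t \<le> 2\<close> by auto
  ultimately show "P t" by auto
qed

lemma B_nb:
  assumes w: "w \<in> B i" "w' \<in> B i" and e: "E w x" "\<not> E w' x"
  shows "x \<in> A (i - 2) \<union> B (i - 1) \<union> (B (i + 1) \<union> A (i + 2))"
proof -
  note pw = B_props[OF w(1)] and pw' = B_props[OF w(2)]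
  have wV: "w \<in> V" "w \<notin> CC" using w(1) B_notC unfolding Bset_iff by blast+
  have xV: "x \<in> V" using e EV Esym by blast
  have xC: "x \<notin> CC"
  proof
    assume "x \<in> CC"
    then obtain t where t: "x = cy t" using Ccy by blast
    then show False using e B_adj[OF w(1)] B_adj[OF w(2)] by auto
  qed
  have x0: "\<not> E x (cy i)" using triangle e(1) pw Esym by blast
  have noA: "x \<notin> A i"
  proof
    assume xa: "x \<in> A i"
    note px = A_props[OF xa]
    show False
      apply (rule X2_contra[OF sg ab, of "cy (i - 1)" "cy i" "cy (i + 1)" x "cy (i - 2)" w' "cy (i + 2)"])
      using pw' px e m10 by (simp_all add: cyE)
  qed
  have hole5: False if y1: "y1 \<in> V" "y1 \<notin> CC" and y2: "y2 \<in> V" "y2 \<notin> CC" and "E y1 y2"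
    and a1: "\<And>t. t \<le> 2 \<Longrightarrow> E y1 (cy (a + int t)) \<longleftrightarrow> t = 2"
    and a2: "\<And>t. t \<le> 2 \<Longrightarrow> E y2 (cy (a + int t)) \<longleftrightarrow> t = 0" for y1 y2 a
  proof -
    have "m \<le> 2 + 3" by (rule seg2[OF y1 y2 \<open>E y1 y2\<close> _ _ a1 a2]) (use m10 in auto)
    then show False using m10 by simp
  qed
  have t2: "t \<le> 2 \<longleftrightarrow> t = 0 \<or> t = 1 \<or> t = (2::nat)" for t by auto
  consider "\<not> E x (cy (i - 2)) \<and> \<not> E x (cy (i - 1)) \<and> \<not> E x (cy (i + 1)) \<and> \<not> E x (cy (i + 2))"
    | "E x (cy (i + 1))" | "E x (cy (i - 1))" | "E x (cy (i + 2))" | "E x (cy (i - 2))" by blast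
  then show ?thesis
  proof cases
    case 1
    have False
      apply (rule T2_contra[OF sg ab, of "cy i" "cy (i - 1)" "cy (i - 2)" "cy (i + 1)" "cy (i + 2)" w x])
      using pw 1 x0 e m10 by (simp_all add: cyE)
    then show ?thesis ..
  next
    case 2
    have e: "i + 1 + 1 = i + 2" "i + 1 - 1 = i" by simp_all
    show ?thesis using classify[OF xV xC 2] noA unfolding e by blast
  next
    case 3
    have e: "i - 1 + 1 = i" "i - 1 - 1 = i - 2" by simp_all
    show ?thesis using classify[OF xV xC 3] noA unfolding e by blast
  next
    case 4
    from classify[OF xV xC 4] have "x \<in> B (i + 2) \<or> x \<in> A (i + 1) \<or> x \<in> A (i + 3)"
      by (simp add: algebra_simps)
    then have False
    proof (elim disjE)
      assume xb: "x \<in> B (i + 2)"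
      show False
      proof (rule hole5[OF xV xC wV Esym[OF e(1)], of i])
        fix t :: nat assume "t \<le> 2"
        then show "E x (cy (i + int t)) \<longleftrightarrow> t = 2" by (rule small3[where P="\<lambda>tt. E x (cy (i + int tt)) \<longleftrightarrow> tt = 2"]) (use B_adj[OF xb] m10 in \<open>simp_all add: cy_eq_small\<close>)
      next
        fix t :: nat assume "t \<le> 2"
        then show "E w (cy (i + int t)) \<longleftrightarrow> t = 0" by (rule small3[where P="\<lambda>tt. E w (cy (i + int tt)) \<longleftrightarrow> tt = 0"]) (use B_adj[OF w(1)] m10 in \<open>simp_all add: cy_eq_small\<close>)
      qed
    next
      assume xa: "x \<in> A (i + 1)"
      then show False using x0 A_adj[OF xa] by simp
    next
      assume xa: "x \<in> A (i + 3)"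
      show False
      proof (rule hole5[OF xV xC wV Esym[OF e(1)], of i])
        fix t :: nat assume "t \<le> 2"
        then show "E x (cy (i + int t)) \<longleftrightarrow> t = 2" by (rule small3[where P="\<lambda>tt. E x (cy (i + int tt)) \<longleftrightarrow> tt = 2"]) (use A_adj[OF xa] m10 in \<open>simp_all add: cy_eq_small\<close>)
      next
        fix t :: nat assume "t \<le> 2"
        then show "E w (cy (i + int t)) \<longleftrightarrow> t = 0" by (rule small3[where P="\<lambda>tt. E w (cy (i + int tt)) \<longleftrightarrow> tt = 0"]) (use B_adj[OF w(1)] m10 in \<open>simp_all add: cy_eq_small\<close>)
      qed
    qed
    then show ?thesis ..
  next
    case 5
    from classify[OF xV xC 5] have "x \<in> B (i - 2) \<or> x \<in> A (i - 3) \<or> x \<in> A (i - 1)"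
      by (simp add: algebra_simps)
    then have False
    proof (elim disjE)
      assume xb: "x \<in> B (i - 2)"
      show False
      proof (rule hole5[OF wV xV xC e(1), of "i - 2"])
        fix t :: nat assume "t \<le> 2"
        then show "E w (cy (i - 2 + int t)) \<longleftrightarrow> t = 2" by (rule small3[where P="\<lambda>tt. E w (cy (i - 2 + int tt)) \<longleftrightarrow> tt = 2"]) (use B_adj[OF w(1)] m10 in \<open>simp_all add: cy_eq_small\<close>)
      next
        fix t :: nat assume "t \<le> 2"
        then show "E x (cy (i - 2 + int t)) \<longleftrightarrow> t = 0" by (rule small3[where P="\<lambda>tt. E x (cy (i - 2 + int tt)) \<longleftrightarrow> tt = 0"]) (use B_adj[OF xb] m10 in \<open>simp_all add: cy_eq_small\<close>)
      qed
    next
      assume xa: "x \<in> A (i - 1)"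
      then show False using x0 A_adj[OF xa] by simp
    next
      assume xa: "x \<in> A (i - 3)"
      show False
      proof (rule hole5[OF wV xV xC e(1), of "i - 2"])
        fix t :: nat assume "t \<le> 2"
        then show "E w (cy (i - 2 + int t)) \<longleftrightarrow> t = 2" by (rule small3[where P="\<lambda>tt. E w (cy (i - 2 + int tt)) \<longleftrightarrow> tt = 2"]) (use B_adj[OF w(1)] m10 in \<open>simp_all add: cy_eq_small\<close>)
      next
        fix t :: nat assume "t \<le> 2"
        then show "E x (cy (i - 2 + int t)) \<longleftrightarrow> t = 0" by (rule small3[where P="\<lambda>tt. E x (cy (i - 2 + int tt)) \<longleftrightarrow> tt = 0"]) (use A_adj[OF xa] m10 in \<open>simp_all add: cy_eq_small\<close>)
      qed
    qed
    then show ?thesis ..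
  qed
qed

end

lemma abs_order:
  assumes lt: "\<And>u u'. u \<in> S \<Longrightarrow> u' \<in> S \<Longrightarrow> R u u' \<longleftrightarrow> (\<not> L u \<subseteq> L u' \<or> \<not> Rr u' \<subseteq> Rr u)"
    and cL: "\<And>u u'. u \<in> S \<Longrightarrow> u' \<in> S \<Longrightarrow> L u \<subseteq> L u' \<or> L u' \<subseteq> L u"
    and cR: "\<And>u u'. u \<in> S \<Longrightarrow> u' \<in> S \<Longrightarrow> Rr u \<subseteq> Rr u' \<or> Rr u' \<subseteq> Rr u"
    and cons: "\<And>u u'. u \<in> S \<Longrightarrow> u' \<in> S \<Longrightarrow> L u \<subseteq> L u' \<or> Rr u \<subseteq> Rr u'"
  shows "strict_po_on S R \<and> (\<forall>u\<in>S. \<forall>u'\<in>S. (\<not> R u u' \<and> \<not> R u' u) \<longleftrightarrow> (L u = L u' \<and> Rr u = Rr u'))"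
proof -
  define le where "le a b \<longleftrightarrow> L b \<subseteq> L a \<and> Rr a \<subseteq> Rr b" for a b
  have Rle: "R a b \<longleftrightarrow> \<not> le b a" if "a \<in> S" "b \<in> S" for a b
    using lt[OF that] unfolding le_def by blast
  have tot: "le a b \<or> le b a" if "a \<in> S" "b \<in> S" for a b
    using cL[OF that] cR[OF that] cons[OF that] cons[OF that(2,1)] unfolding le_def by blast
  have tr: "le a b \<Longrightarrow> le b d \<Longrightarrow> le a d" for a b d unfolding le_def by blast
  have "irreflp_on S R" unfolding irreflp_on_def using Rle unfolding le_def by blast
  moreover have "transp_on S R"
  proof (rule transp_onI)
    fix a b d assume s: "a \<in> S" "b \<in> S" "d \<in> S" and r: "R a b" "R b d"
    have "\<not> le b a" "\<not> le d b" using r Rle s by blast+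
    then have "le a b" using tot s by blast
    show "R a d"
    proof (rule ccontr)
      assume "\<not> R a d"
      then have "le d a" using Rle s by blast
      then have "le d b" using tr \<open>le a b\<close> by blast
      then show False using \<open>\<not> le d b\<close> by blast
    qed
  qed
  moreover have "\<forall>u\<in>S. \<forall>u'\<in>S. (\<not> R u u' \<and> \<not> R u' u) \<longleftrightarrow> (L u = L u' \<and> Rr u = Rr u')"
    using Rle unfolding le_def by blast
  ultimately show ?thesis unfolding strict_po_on_def by blast
qed

context G begin

lemma main_A:
  "strict_po_on (A i) (ltA V E c m i) \<and>
      (\<forall>u \<in> A i. \<forall>u' \<in> A i. (\<not> ltA V E c m i u u' \<and> \<not> ltA V E c m i u' u) \<longleftrightarrow> nbhd E u = nbhd E u')"
proof -
  define L where "L u = {w \<in> B (i - 2) \<union> A (i - 1). u \<in> nbhd E w}" for u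
  define R where "R u = {w \<in> A (i + 1) \<union> B (i + 2). u \<in> nbhd E w}" for u
  have mem: "u \<in> nbhd E w \<longleftrightarrow> E u w" for u w unfolding nbhd_def using Eiff by simp
  have lt: "ltA V E c m i u u' \<longleftrightarrow> (\<not> L u \<subseteq> L u' \<or> \<not> R u' \<subseteq> R u)" for u u'
    unfolding ltA_def L_def R_def by blast
  have cL: "L u \<subseteq> L u' \<or> L u' \<subseteq> L u" if "u \<in> A i" "u' \<in> A i" for u u'
  proof (rule ccontr)
    assume "\<not> (L u \<subseteq> L u' \<or> L u' \<subseteq> L u)"
    then obtain x y where "x \<in> L u" "x \<notin> L u'" "y \<in> L u'" "y \<notin> L u" by blast
    then show False using A_chainL[OF that, of x y] unfolding L_def mem by blast
  qed
  have cR: "R u \<subseteq> R u' \<or> R u' \<subseteq> R u" if "u \<in> A i" "u' \<in> A i" for u u'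
  proof (rule ccontr)
    assume "\<not> (R u \<subseteq> R u' \<or> R u' \<subseteq> R u)"
    then obtain x y where "x \<in> R u" "x \<notin> R u'" "y \<in> R u'" "y \<notin> R u" by blast
    then show False using A_chainR[OF that, of x y] unfolding R_def mem by blast
  qed
  have cons: "L u \<subseteq> L u' \<or> R u \<subseteq> R u'" if "u \<in> A i" "u' \<in> A i" for u u'
  proof (rule ccontr)
    assume "\<not> (L u \<subseteq> L u' \<or> R u \<subseteq> R u')"
    then obtain x y where "x \<in> L u" "x \<notin> L u'" "y \<in> R u" "y \<notin> R u'" by blast
    then show False using A_cons[OF that, of x y] unfolding L_def R_def mem by blast
  qed
  have ao: "strict_po_on (A i) (ltA V E c m i) \<and>
    (\<forall>u\<in>A i. \<forall>u'\<in>A i. (\<not> ltA V E c m i u u' \<and> \<not> ltA V E c m i u' u) \<longleftrightarrow> (L u = L u' \<and> R u = R u'))"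
    by (rule abs_order) (use lt cL cR cons in auto)
  have nb: "nbhd E u = nbhd E u' \<longleftrightarrow> (L u = L u' \<and> R u = R u')" if "u \<in> A i" "u' \<in> A i" for u u'
  proof
    assume "nbhd E u = nbhd E u'"
    then have "E u w \<longleftrightarrow> E u' w" for w unfolding nbhd_def by blast
    then show "L u = L u' \<and> R u = R u'" unfolding L_def R_def mem by blast
  next
    assume h: "L u = L u' \<and> R u = R u'"
    have "E u x \<longleftrightarrow> E u' x" for x
    proof
      assume "E u x"
      show "E u' x"
      proof (rule ccontr)
        assume "\<not> E u' x"
        from A_nb[OF that \<open>E u x\<close> this] have "x \<in> L u \<and> x \<notin> L u' \<or> x \<in> R u \<and> x \<notin> R u'"
          unfolding L_def R_def mem using \<open>E u x\<close> \<open>\<not> E u' x\<close> by blast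
        then show False using h by blast
      qed
    next
      assume "E u' x"
      show "E u x"
      proof (rule ccontr)
        assume "\<not> E u x"
        from A_nb[OF that(2,1) \<open>E u' x\<close> this] have "x \<in> L u' \<and> x \<notin> L u \<or> x \<in> R u' \<and> x \<notin> R u"
          unfolding L_def R_def mem using \<open>E u' x\<close> \<open>\<not> E u x\<close> by blast
        then show False using h by blast
      qed
    qed
    then show "nbhd E u = nbhd E u'" unfolding nbhd_def by blast
  qed
  show ?thesis using ao nb by blast
qed

lemma main_B:
  "strict_po_on (B i) (ltB V E c m i) \<and>
      (\<forall>u \<in> B i. \<forall>u' \<in> B i. (\<not> ltB V E c m i u u' \<and> \<not> ltB V E c m i u' u) \<longleftrightarrow> nbhd E u = nbhd E u')"
proof -
  define L where "L u = {w \<in> A (i - 2) \<union> B (i - 1). u \<in> nbhd E w}" for u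
  define R where "R u = {w \<in> B (i + 1) \<union> A (i + 2). u \<in> nbhd E w}" for u
  have mem: "u \<in> nbhd E w \<longleftrightarrow> E u w" for u w unfolding nbhd_def using Eiff by simp
  have lt: "ltB V E c m i u u' \<longleftrightarrow> (\<not> L u \<subseteq> L u' \<or> \<not> R u' \<subseteq> R u)" for u u'
    unfolding ltB_def L_def R_def by blast
  have cL: "L u \<subseteq> L u' \<or> L u' \<subseteq> L u" if "u \<in> B i" "u' \<in> B i" for u u'
  proof (rule ccontr)
    assume "\<not> (L u \<subseteq> L u' \<or> L u' \<subseteq> L u)"
    then obtain x y where "x \<in> L u" "x \<notin> L u'" "y \<in> L u'" "y \<notin> L u" by blast
    then show False using B_chainL[OF that, of x y] unfolding L_def mem by blast
  qed
  have cR: "R u \<subseteq> R u' \<or> R u' \<subseteq> R u" if "u \<in> B i" "u' \<in> B i" for u u'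
  proof (rule ccontr)
    assume "\<not> (R u \<subseteq> R u' \<or> R u' \<subseteq> R u)"
    then obtain x y where "x \<in> R u" "x \<notin> R u'" "y \<in> R u'" "y \<notin> R u" by blast
    then show False using B_chainR[OF that, of x y] unfolding R_def mem by blast
  qed
  have cons: "L u \<subseteq> L u' \<or> R u \<subseteq> R u'" if "u \<in> B i" "u' \<in> B i" for u u'
  proof (rule ccontr)
    assume "\<not> (L u \<subseteq> L u' \<or> R u \<subseteq> R u')"
    then obtain x y where "x \<in> L u" "x \<notin> L u'" "y \<in> R u" "y \<notin> R u'" by blast
    then show False using B_cons[OF that, of x y] unfolding L_def R_def mem by blast
  qed
  have ao: "strict_po_on (B i) (ltB V E c m i) \<and>
    (\<forall>u\<in>B i. \<forall>u'\<in>B i. (\<not> ltB V E c m i u u' \<and> \<not> ltB V E c m i u' u) \<longleftrightarrow> (L u = L u' \<and> R u = R u'))"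
    by (rule abs_order) (use lt cL cR cons in auto)
  have nb: "nbhd E u = nbhd E u' \<longleftrightarrow> (L u = L u' \<and> R u = R u')" if "u \<in> B i" "u' \<in> B i" for u u'
  proof
    assume "nbhd E u = nbhd E u'"
    then have "E u w \<longleftrightarrow> E u' w" for w unfolding nbhd_def by blast
    then show "L u = L u' \<and> R u = R u'" unfolding L_def R_def mem by blast
  next
    assume h: "L u = L u' \<and> R u = R u'"
    have "E u x \<longleftrightarrow> E u' x" for x
    proof
      assume "E u x"
      show "E u' x"
      proof (rule ccontr)
        assume "\<not> E u' x"
        from B_nb[OF that \<open>E u x\<close> this] have "x \<in> L u \<and> x \<notin> L u' \<or> x \<in> R u \<and> x \<notin> R u'"
          unfolding L_def R_def mem using \<open>E u x\<close> \<open>\<not> E u' x\<close> by blast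
        then show False using h by blast
      qed
    next
      assume "E u' x"
      show "E u x"
      proof (rule ccontr)
        assume "\<not> E u x"
        from B_nb[OF that(2,1) \<open>E u' x\<close> this] have "x \<in> L u' \<and> x \<notin> L u \<or> x \<in> R u' \<and> x \<notin> R u"
          unfolding L_def R_def mem using \<open>E u' x\<close> \<open>\<not> E u x\<close> by blast
        then show False using h by blast
      qed
    qed
    then show "nbhd E u = nbhd E u'" unfolding nbhd_def by blast
  qed
  show ?thesis using ao nb by blast
qed

end

theorem proposition3p7:
  fixes V :: "'a set" and E :: "'a \<Rightarrow> 'a \<Rightarrow> bool" and c :: "nat \<Rightarrow> 'a" and m :: nat
  assumes "simple_graph V E" and "connected_graph V E" and "almost_bip_perm V E"
    and "shortest_hole V E c m"
  shows "\<forall>i::int. 0 \<le> i \<and> i < int m \<longrightarrow>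
     (strict_po_on (Aset V E c m i) (ltA V E c m i) \<and>
      (\<forall>u \<in> Aset V E c m i. \<forall>u' \<in> Aset V E c m i.
         (\<not> ltA V E c m i u u' \<and> \<not> ltA V E c m i u' u) \<longleftrightarrow> nbhd E u = nbhd E u')) \<and>
     (strict_po_on (Bset V E c m i) (ltB V E c m i) \<and>
      (\<forall>w \<in> Bset V E c m i. \<forall>w' \<in> Bset V E c m i.
         (\<not> ltB V E c m i w w' \<and> \<not> ltB V E c m i w' w) \<longleftrightarrow> nbhd E w = nbhd E w'))"
proof -
  interpret G V E c m using assms(1,3,4) by unfold_locales
  show ?thesis using main_A main_B by blast
qed

end
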